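(* Let $\mathbb{X},\mathbb{Y}$ be $n$-dimensional real polyhedral Banach spaces with $|\mathrm{Ext}\,B_{\mathbb{X}^*}|=|\mathrm{Ext}\,B_{\mathbb{Y}^*}|$, and let $T\in\mathbb{L}(\mathbb{X},\mathbb{Y})$ be a bijective operator that preserves parallel pairs (equivalently, TEA pairs). Then: (i) for each $f\in\mathrm{Ext}\,B_{\mathbb{X}^*}$ there exists a unique $g\in\mathrm{Ext}\,B_{\mathbb{Y}^*}$ such that $T(\mathrm{Sm}(f))=\mathrm{Sm}(g)$; (ii) for each non-zero $x\in\mathbb{X}$, $|\mathrm{Ext}\,J(x)|=|\mathrm{Ext}\,J(Tx)|$.
   Context: A finite-dimensional Banach space is polyhedral if its unit ball has finitely many extreme points. For non-zero $x$, $J(x)=\{f\in S_{\mathbb{X}^*}: f(x)=\|x\|\}$ and $\mathrm{Ext}\,J(x)$ denotes its set of extreme points. For $f\in\mathrm{Ext}\,B_{\mathbb{X}^*}$, $\mathrm{Sm}(f)=\{x\in\mathbb{X}: J(x)=\{f\}\}$. $(x,y)$ is a parallel pair if $\|x+\lambda y\|=\|x\|+\|y\|$ for some $\lambda$ with $|\lambda|=1$; a TEA pair if $\|x+y\|=\|x\|+\|y\|$. $T$ preserves parallel pairs if $(x,y)$ parallel in $\mathbb{X}$ implies $(Tx,Ty)$ parallel in $\mathbb{Y}$. *)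

theory Defs
  imports "HOL-Analysis.Analysis"
begin

text \<open>A finite-dimensional real Banach space is modelled as a euclidean_space type
  (providing the underlying finite-dimensional real vector space) together with an
  arbitrary norm N on it. Linear functionals are represented via the inner product:
  the vector u stands for the functional x maps to u \<bullet> x.\<close>

definition is_norm :: "('a::real_vector \<Rightarrow> real) \<Rightarrow> bool" where
  "is_norm N \<longleftrightarrow> (\<forall>x. N x = 0 \<longleftrightarrow> x = 0) \<and>
     (\<forall>x y. N (x + y) \<le> N x + N y) \<and> (\<forall>c x. N (c *\<^sub>R x) = \<bar>c\<bar> * N x)"

definition unit_ball :: "('a::real_vector \<Rightarrow> real) \<Rightarrow> 'a set" where
  "unit_ball N = {x. N x \<le> 1}"

definition Ext :: "'a::real_vector set \<Rightarrow> 'a set" where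
  "Ext S = {x. x extreme_point_of S}"

definition polyhedral :: "('a::real_vector \<Rightarrow> real) \<Rightarrow> bool" where
  "polyhedral N \<longleftrightarrow> finite (Ext (unit_ball N))"

definition dual_norm :: "('a::euclidean_space \<Rightarrow> real) \<Rightarrow> 'a \<Rightarrow> real" where
  "dual_norm N u = (SUP x \<in> unit_ball N. \<bar>u \<bullet> x\<bar>)"

definition dual_ball :: "('a::euclidean_space \<Rightarrow> real) \<Rightarrow> 'a set" where
  "dual_ball N = {u. dual_norm N u \<le> 1}"

definition dual_sphere :: "('a::euclidean_space \<Rightarrow> real) \<Rightarrow> 'a set" where
  "dual_sphere N = {u. dual_norm N u = 1}"

definition J :: "('a::euclidean_space \<Rightarrow> real) \<Rightarrow> 'a \<Rightarrow> 'a set" where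
  "J N x = {f \<in> dual_sphere N. f \<bullet> x = N x}"

definition Sm :: "('a::euclidean_space \<Rightarrow> real) \<Rightarrow> 'a \<Rightarrow> 'a set" where
  "Sm N f = {x. J N x = {f}}"

definition parallel_pair :: "('a::real_vector \<Rightarrow> real) \<Rightarrow> 'a \<Rightarrow> 'a \<Rightarrow> bool" where
  "parallel_pair N x y \<longleftrightarrow> (\<exists>l::real. \<bar>l\<bar> = 1 \<and> N (x + l *\<^sub>R y) = N x + N y)"

definition preserves_parallel ::
  "('a::real_vector \<Rightarrow> real) \<Rightarrow> ('b::real_vector \<Rightarrow> real) \<Rightarrow> ('a \<Rightarrow> 'b) \<Rightarrow> bool" where
  "preserves_parallel NX NY T \<longleftrightarrow>
     (\<forall>x y. parallel_pair NX x y \<longrightarrow> parallel_pair NY (T x) (T y))"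

end

theory Submission
  imports Defs
begin

locale pnorm =
  fixes N :: "'a::euclidean_space \<Rightarrow> real"
  assumes isn: "is_norm N" and poly: "polyhedral N"
begin

lemma Nzero_iff: "N x = 0 \<longleftrightarrow> x = 0" using isn by (simp add: is_norm_def)
lemma Ntri: "N (x + y) \<le> N x + N y" using isn by (simp add: is_norm_def)
lemma Nscale: "N (c *\<^sub>R x) = \<bar>c\<bar> * N x" using isn by (simp add: is_norm_def)
lemma N0[simp]: "N 0 = 0" using Nzero_iff by simp
lemma Nneg[simp]: "N (- x) = N x" using Nscale[of "-1" x] by simp
lemma Nnonneg: "0 \<le> N x"
  using Ntri[of x "-x"] by simp
lemma Npos: "x \<noteq> 0 \<Longrightarrow> 0 < N x"
  using Nnonneg[of x] Nzero_iff[of x] by linarith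

lemma N_convex: "convex_on UNIV N"
proof (rule convex_onI)
  fix t x y :: _ assume "0 < (t::real)" "t < 1"
  then show "N ((1 - t) *\<^sub>R x + t *\<^sub>R y) \<le> (1 - t) * N x + t * N y"
    using Ntri[of "(1 - t) *\<^sub>R x" "t *\<^sub>R y"] Nscale[of "1-t" x] Nscale[of t y] by simp
qed simp

lemma N_cont: "continuous_on UNIV N"
  using convex_on_continuous[OF open_UNIV N_convex] .

lemma N_lower: "\<exists>c>0. \<forall>x. c * norm x \<le> N x"
proof -
  obtain b :: 'a where b: "b \<in> Basis" using nonempty_Basis by blast
  have ne: "sphere (0::'a) 1 \<noteq> {}" using b by (auto intro!: exI[of _ b])
  obtain x0 where x0: "x0 \<in> sphere 0 1" "\<And>y. y \<in> sphere 0 1 \<Longrightarrow> N x0 \<le> N y"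
    using continuous_attains_inf[OF compact_sphere ne continuous_on_subset[OF N_cont]] by blast
  have "x0 \<noteq> 0" using x0(1) by auto
  then have c: "N x0 > 0" using Npos by blast
  have "N x0 * norm x \<le> N x" for x
  proof (cases "x = 0")
    case False
    have "N x0 \<le> N ((1/norm x) *\<^sub>R x)" using x0(2)[of "(1/norm x) *\<^sub>R x"] False by simp
    also have "\<dots> = N x / norm x" using Nscale[of "1/norm x" x] by simp
    finally show ?thesis using False by (simp add: field_simps)
  qed simp
  with c show ?thesis by blast
qed

lemma N_upper: "\<exists>C>0. \<forall>x. N x \<le> C * norm x"
proof -
  obtain b :: 'a where b: "b \<in> Basis" using nonempty_Basis by blast
  have ne: "sphere (0::'a) 1 \<noteq> {}" using b by (auto intro!: exI[of _ b])
  obtain x0 where x0: "x0 \<in> sphere 0 1" "\<And>y. y \<in> sphere 0 1 \<Longrightarrow> N y \<le> N x0"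
    using continuous_attains_sup[OF compact_sphere ne continuous_on_subset[OF N_cont]] by blast
  have "x0 \<noteq> 0" using x0(1) by auto
  then have c: "N x0 > 0" using Npos by blast
  have "N x \<le> N x0 * norm x" for x
  proof (cases "x = 0")
    case False
    have "N x / norm x = N ((1/norm x) *\<^sub>R x)" using Nscale[of "1/norm x" x] by simp
    also have "\<dots> \<le> N x0" using x0(2)[of "(1/norm x) *\<^sub>R x"] False by simp
    finally show ?thesis using False by (simp add: field_simps)
  qed simp
  with c show ?thesis by blast
qed


definition cl where "cl = (SOME c. c > 0 \<and> (\<forall>x. c * norm x \<le> N x))"
definition Cu where "Cu = (SOME C. C > 0 \<and> (\<forall>x. N x \<le> C * norm x))"

lemma cl: "cl > 0" "cl * norm x \<le> N x"
  using someI_ex[OF N_lower] unfolding cl_def by auto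
lemma Cu: "Cu > 0" "N x \<le> Cu * norm x"
  using someI_ex[OF N_upper] unfolding Cu_def by auto

lemma ub_norm: "x \<in> unit_ball N \<Longrightarrow> norm x \<le> 1 / cl"
  using cl(2)[of x] cl(1) unfolding unit_ball_def by (simp add: field_simps)

lemma ub_convex: "convex (unit_ball N)"
  unfolding convex_def unit_ball_def
proof (clarsimp)
  fix x y :: 'a and u v :: real
  assume "N x \<le> 1" "N y \<le> 1" "0 \<le> u" "0 \<le> v" "u + v = 1"
  then show "N (u *\<^sub>R x + v *\<^sub>R y) \<le> 1"
    using Ntri[of "u *\<^sub>R x" "v *\<^sub>R y"] Nscale[of u x] Nscale[of v y]
    by (smt (verit) mult_left_le)
qed

lemma ub_closed: "closed (unit_ball N)"
  unfolding unit_ball_def by (rule closed_Collect_le[OF N_cont continuous_on_const])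

lemma ub_bounded: "bounded (unit_ball N)"
  unfolding bounded_iff using ub_norm by blast

lemma ub_compact: "compact (unit_ball N)"
  using ub_closed ub_bounded compact_eq_bounded_closed by blast

lemma ub_cball: "cball 0 (1 / Cu) \<subseteq> unit_ball N"
proof
  fix x :: 'a assume "x \<in> cball 0 (1/Cu)"
  then have "norm x \<le> 1 / Cu" by simp
  then have "Cu * norm x \<le> 1" using Cu(1) by (simp add: field_simps)
  then show "x \<in> unit_ball N" using Cu(2)[of x] unfolding unit_ball_def by simp
qed

lemma ub_0: "0 \<in> unit_ball N" unfolding unit_ball_def by simp

lemma ub_sym: "x \<in> unit_ball N \<Longrightarrow> - x \<in> unit_ball N"
  unfolding unit_ball_def by simp

lemma ub_interior: "0 \<in> interior (unit_ball N)"
proof -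
  have "ball 0 (1/Cu) \<subseteq> unit_ball N" using ub_cball by auto
  moreover have "0 \<in> ball (0::'a) (1/Cu)" using Cu(1) by simp
  ultimately show ?thesis by (meson interior_maximal open_ball subsetD)
qed

lemma dn_bdd: "bdd_above ((\<lambda>x. \<bar>u \<bullet> x\<bar>) ` unit_ball N)"
proof (rule bdd_aboveI2)
  fix x assume "x \<in> unit_ball N"
  then have "norm x \<le> 1 / cl" by (rule ub_norm)
  then show "\<bar>u \<bullet> x\<bar> \<le> norm u * (1/cl)"
    by (meson Cauchy_Schwarz_ineq2 mult_left_mono norm_ge_zero order_trans)
qed

lemma dn_nonneg: "0 \<le> dual_norm N u"
  unfolding dual_norm_def using cSUP_upper[OF ub_0 dn_bdd] by simp

lemma dn_ineq: "\<bar>u \<bullet> x\<bar> \<le> dual_norm N u * N x"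
proof (cases "x = 0")
  case True then show ?thesis by simp
next
  case False
  have p: "N x > 0" using Npos[OF False] .
  have "(1 / N x) *\<^sub>R x \<in> unit_ball N"
    unfolding unit_ball_def using Nscale[of "1 / N x" x] p by simp
  then have "\<bar>u \<bullet> ((1 / N x) *\<^sub>R x)\<bar> \<le> dual_norm N u"
    unfolding dual_norm_def using cSUP_upper[OF _ dn_bdd] by blast
  then have "\<bar>u \<bullet> x\<bar> / N x \<le> dual_norm N u" using p by (simp add: abs_mult)
  then show ?thesis using p by (simp add: field_simps)
qed

lemma db_iff: "u \<in> dual_ball N \<longleftrightarrow> (\<forall>x\<in>unit_ball N. \<bar>u \<bullet> x\<bar> \<le> 1)"
  unfolding dual_ball_def dual_norm_def using cSUP_le_iff[OF _ dn_bdd] ub_0 by blast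

lemma db_eq: "dual_ball N = (\<Inter>x\<in>unit_ball N. {u. \<bar>u \<bullet> x\<bar> \<le> 1})"
  using db_iff by blast

lemma db_closed: "closed (dual_ball N)"
  unfolding db_eq
  by (intro closed_INT ballI closed_Collect_le continuous_intros) 

lemma db_convex: "convex (dual_ball N)"
  unfolding db_eq
proof (intro convex_INT ballI)
  fix x :: 'a
  have "{u. \<bar>u \<bullet> x\<bar> \<le> 1} = {u. u \<bullet> x \<le> 1} \<inter> {u. -(u \<bullet> x) \<le> 1}" by auto
  also have "convex \<dots>" using convex_halfspace_le[of x 1] convex_halfspace_le[of "-x" 1]
    by (simp add: convex_Int inner_commute)
  finally show "convex {u. \<bar>u \<bullet> x\<bar> \<le> 1}" .
qed

lemma db_norm: "u \<in> dual_ball N \<Longrightarrow> norm u \<le> Cu"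
proof (cases "u = 0")
  case True then show ?thesis using Cu(1) by simp
next
  case False
  assume u: "u \<in> dual_ball N"
  let ?x = "(1 / (Cu * norm u)) *\<^sub>R u"
  have "norm ?x = 1 / Cu" using False Cu(1) by simp
  then have "?x \<in> unit_ball N" using ub_cball by auto
  then have "\<bar>u \<bullet> ?x\<bar> \<le> 1" using u db_iff by blast
  moreover have "u \<bullet> ?x = (norm u)^2 / (Cu * norm u)"
    by (simp add: power2_norm_eq_inner)
  moreover have "(norm u)^2 / (Cu * norm u) = norm u / Cu" using False
    by (simp add: power2_eq_square)
  ultimately have "norm u / Cu \<le> 1" by (metis abs_le_D1)
  then show ?thesis using Cu(1) by (simp add: field_simps)
qed

lemma db_bounded: "bounded (dual_ball N)"
  unfolding bounded_iff using db_norm by blast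

lemma db_compact: "compact (dual_ball N)"
  using db_closed db_bounded compact_eq_bounded_closed by blast

lemma db_sym: "u \<in> dual_ball N \<Longrightarrow> - u \<in> dual_ball N"
  using db_iff by auto

lemma db_le: "u \<in> dual_ball N \<Longrightarrow> u \<bullet> x \<le> N x"
proof -
  assume "u \<in> dual_ball N"
  then have "dual_norm N u \<le> 1" unfolding dual_ball_def by simp
  then have "dual_norm N u * N x \<le> N x" using mult_left_le_one_le[OF Nnonneg dn_nonneg] by blast
  then show ?thesis using dn_ineq[of u x] by linarith
qed


lemma HB: "\<exists>u\<in>dual_ball N. u \<bullet> x = N x"
proof (cases "x = 0")
  case True
  have "0 \<in> dual_ball N" using db_iff by simp
  then show ?thesis using True by auto
next
  case False
  have Nx: "N x > 0" using Npos[OF False] .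
  define p where "p = (1 / N x) *\<^sub>R x"
  have Np: "N p = 1" unfolding p_def using Nscale[of "1 / N x" x] Nx by simp
  have pne: "p \<noteq> 0" using Np by auto
  let ?S = "unit_ball N"
  have cl: "closure ?S = ?S" using ub_closed by simp
  have ri: "rel_interior ?S = interior ?S"
    using ub_interior rel_interior_nonempty_interior by blast
  have pS: "p \<in> ?S" unfolding unit_ball_def using Np by simp
  have pint: "p \<notin> interior ?S"
  proof
    assume "p \<in> interior ?S"
    then obtain e where e: "e > 0" "ball p e \<subseteq> ?S" using mem_interior by blast
    define q where "q = (1 + e / (2 * norm p)) *\<^sub>R p"
    have "dist p q = e / 2" unfolding q_def dist_norm using pne e(1)
      by (simp add: algebra_simps)
    then have "q \<in> ?S" using e by auto
    moreover have "N q = 1 + e / (2 * norm p)"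
      unfolding q_def using Nscale[of "1 + e / (2 * norm p)" p] Np e(1) by simp
    moreover have "e / (2 * norm p) > 0" using e(1) pne by simp
    ultimately show False unfolding unit_ball_def by simp
  qed
  obtain a where a: "a \<noteq> 0" "\<And>y. y \<in> ?S \<Longrightarrow> a \<bullet> p \<le> a \<bullet> y"
      "\<And>y. y \<in> interior ?S \<Longrightarrow> a \<bullet> p < a \<bullet> y"
    using supporting_hyperplane_relative_frontier[OF ub_convex, of p] cl ri pS pint by metis
  have ap: "a \<bullet> p < 0" using a(3)[OF ub_interior] by simp
  define u where "u = (1 / (a \<bullet> p)) *\<^sub>R a"
  have up: "u \<bullet> p = 1" unfolding u_def using ap by simp
  have "\<bar>u \<bullet> y\<bar> \<le> 1" if y: "y \<in> ?S" for y
  proof -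
    have "a \<bullet> p \<le> a \<bullet> y" using a(2) y by blast
    moreover have "a \<bullet> p \<le> - (a \<bullet> y)" using a(2)[OF ub_sym[OF y]] by simp
    ultimately show ?thesis unfolding u_def using ap
      by (simp add: abs_le_iff field_simps)
  qed
  then have "u \<in> dual_ball N" using db_iff by blast
  moreover have "u \<bullet> x = N x"
  proof -
    have "x = N x *\<^sub>R p" unfolding p_def using Nx by simp
    then have "u \<bullet> x = N x * (u \<bullet> p)" by (metis inner_scaleR_right)
    then show ?thesis using up by simp
  qed
  ultimately show ?thesis by blast
qed

definition E where "E = Ext (dual_ball N)"

lemma db_polyhedron: "polyhedron (dual_ball N)"
proof -
  define V where "V = Ext (unit_ball N)"
  have fV: "finite V" using poly unfolding V_def polyhedral_def by simp
  have hull: "unit_ball N = convex hull V"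
    unfolding V_def Ext_def using Krein_Milman_Minkowski[OF ub_compact ub_convex] .
  have VS: "V \<subseteq> unit_ball N" unfolding V_def Ext_def extreme_point_of_def by auto
  have eq: "dual_ball N = (\<Inter>v\<in>V. {u. v \<bullet> u \<le> 1} \<inter> {u. (- v) \<bullet> u \<le> 1})"
  proof
    show "dual_ball N \<subseteq> (\<Inter>v\<in>V. {u. v \<bullet> u \<le> 1} \<inter> {u. (- v) \<bullet> u \<le> 1})"
      using VS db_iff by (force simp: inner_commute abs_le_iff)
  next
    show "(\<Inter>v\<in>V. {u. v \<bullet> u \<le> 1} \<inter> {u. (- v) \<bullet> u \<le> 1}) \<subseteq> dual_ball N"
    proof
      fix u assume u: "u \<in> (\<Inter>v\<in>V. {u. v \<bullet> u \<le> 1} \<inter> {u. (- v) \<bullet> u \<le> 1})"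
      have cvx: "convex {x. \<bar>u \<bullet> x\<bar> \<le> 1}"
      proof -
        have "{x. \<bar>u \<bullet> x\<bar> \<le> 1} = {x. u \<bullet> x \<le> 1} \<inter> {x. (-u) \<bullet> x \<le> 1}" by auto
        then show ?thesis using convex_halfspace_le convex_Int by metis
      qed
      have "V \<subseteq> {x. \<bar>u \<bullet> x\<bar> \<le> 1}" using u by (auto simp: inner_commute abs_le_iff)
      then have "convex hull V \<subseteq> {x. \<bar>u \<bullet> x\<bar> \<le> 1}" using cvx by (simp add: hull_minimal)
      then show "u \<in> dual_ball N" using db_iff hull by blast
    qed
  qed
  have pv: "\<And>v::'a. polyhedron ({u. v \<bullet> u \<le> 1} \<inter> {u. (- v) \<bullet> u \<le> 1})"
    by (intro polyhedron_Int polyhedron_halfspace_le)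
  have "polyhedron (\<Inter>((\<lambda>v. {u. v \<bullet> u \<le> 1} \<inter> {u. (- v) \<bullet> u \<le> 1}) ` V))"
  proof (rule polyhedron_Inter)
    show "finite ((\<lambda>v. {u. v \<bullet> u \<le> 1} \<inter> {u. (- v) \<bullet> u \<le> 1}) ` V)" using fV by blast
  next
    fix S assume "S \<in> (\<lambda>v. {u. v \<bullet> u \<le> 1} \<inter> {u. (- v) \<bullet> u \<le> 1}) ` V"
    then obtain v where "S = {u. v \<bullet> u \<le> 1} \<inter> {u. (- v) \<bullet> u \<le> 1}" by blast
    then show "polyhedron S" using pv by metis
  qed
  then show ?thesis using eq by simp
qed

lemma E_finite: "finite E"
  unfolding E_def Ext_def using finite_polyhedron_extreme_points[OF db_polyhedron] .

lemma E_db: "f \<in> E \<Longrightarrow> f \<in> dual_ball N"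
  unfolding E_def Ext_def extreme_point_of_def by auto

lemma E_le: "f \<in> E \<Longrightarrow> f \<bullet> x \<le> N x"
  using E_db db_le by blast

lemma face_x: "(dual_ball N \<inter> {u. x \<bullet> u = N x}) face_of dual_ball N"
  by (rule face_of_Int_supporting_hyperplane_le[OF db_convex]) (simp add: db_le inner_commute)

lemma E_attain: "\<exists>f\<in>E. f \<bullet> x = N x"
proof -
  let ?F = "dual_ball N \<inter> {u. x \<bullet> u = N x}"
  have ne: "?F \<noteq> {}" using HB[of x] by (auto simp: inner_commute)
  have cF: "compact ?F" using db_compact closed_hyperplane by blast
  have vF: "convex ?F" using db_convex convex_hyperplane convex_Int by blast
  have "?F = convex hull {u. u extreme_point_of ?F}" using Krein_Milman_Minkowski[OF cF vF] .
  then obtain f where f: "f extreme_point_of ?F" using ne by fastforce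
  then have "f extreme_point_of dual_ball N" "f \<in> ?F"
    using extreme_point_of_face[OF face_x] by blast+
  then show ?thesis unfolding E_def Ext_def by (auto simp: inner_commute)
qed

lemma open_segment_neg: "x \<in> open_segment a b \<Longrightarrow> - x \<in> open_segment (- a) (- b)"
  by (auto simp: in_segment algebra_simps)

lemma E_neg: "f \<in> E \<Longrightarrow> - f \<in> E"
proof -
  assume f: "f \<in> E"
  have "- f \<in> dual_ball N" using db_sym E_db f by blast
  moreover have "- f \<notin> open_segment a b" if "a \<in> dual_ball N" "b \<in> dual_ball N" for a b
  proof
    assume "- f \<in> open_segment a b"
    then have "f \<in> open_segment (- a) (- b)" using open_segment_neg by fastforce
    moreover have "- a \<in> dual_ball N" "- b \<in> dual_ball N" using that db_sym by auto
    ultimately show False using f unfolding E_def Ext_def extreme_point_of_def by blast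
  qed
  ultimately show ?thesis unfolding E_def Ext_def extreme_point_of_def by blast
qed

lemma E_nz: "0 \<notin> E"
proof
  assume z: "0 \<in> E"
  obtain b :: 'a where b: "b \<in> Basis" using nonempty_Basis by blast
  then have "b \<noteq> 0" by auto
  then have Nb: "N b > 0" using Npos by blast
  obtain u where u: "u \<in> dual_ball N" "u \<bullet> b = N b" using HB by blast
  have "u \<noteq> 0" using u Nb by auto
  have "u \<noteq> - u"
  proof
    assume "u = - u"
    then have "u + u = 0" by (metis add.right_inverse)
    then have "2 *\<^sub>R u = 0" by (simp add: scaleR_2)
    then show False using \<open>u \<noteq> 0\<close> by simp
  qed
  then have "(0::'a) \<in> open_segment u (- u)"
    by (auto simp: in_segment intro!: exI[of _ "1/2"])
  then show False using z u db_sym unfolding E_def Ext_def extreme_point_of_def by blast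
qed


definition A where "A x = {f \<in> E. f \<bullet> x = N x}"
definition Smp where "Smp f = {x. A x = {f}}"

lemma A_ne: "A x \<noteq> {}" unfolding A_def using E_attain by blast
lemma A_sub: "A x \<subseteq> E" unfolding A_def by blast
lemma A_0: "A 0 = E" unfolding A_def by simp

lemma A_opp: "x \<noteq> 0 \<Longrightarrow> f \<in> A x \<Longrightarrow> - f \<notin> A x"
  unfolding A_def using Npos by force

lemma neg_ne: "(u::'a) \<noteq> 0 \<Longrightarrow> - u \<noteq> u"
proof
  assume "u \<noteq> 0" "- u = u"
  then have "u + u = 0" by (metis add.left_inverse)
  then have "2 *\<^sub>R u = 0" by (simp add: scaleR_2)
  then show False using \<open>u \<noteq> 0\<close> by simp
qed

lemma Smp_char: "f \<in> E \<Longrightarrow> x \<in> Smp f \<longleftrightarrow> (\<forall>g\<in>E-{f}. g \<bullet> x < f \<bullet> x)"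
proof
  assume f: "f \<in> E" and x: "x \<in> Smp f"
  then have Ax: "A x = {f}" unfolding Smp_def by simp
  then have fx: "f \<bullet> x = N x" unfolding A_def by auto
  show "\<forall>g\<in>E-{f}. g \<bullet> x < f \<bullet> x"
  proof
    fix g assume g: "g \<in> E - {f}"
    then have "g \<notin> A x" using Ax by auto
    then have "g \<bullet> x \<noteq> N x" using g unfolding A_def by auto
    then show "g \<bullet> x < f \<bullet> x" using E_le[of g x] g fx by auto
  qed
next
  assume f: "f \<in> E" and H: "\<forall>g\<in>E-{f}. g \<bullet> x < f \<bullet> x"
  obtain h where h: "h \<in> E" "h \<bullet> x = N x" using E_attain by blast
  have "h = f"
  proof (rule ccontr)
    assume "h \<noteq> f"
    then have "h \<in> E - {f}" using h by simp
    then have "h \<bullet> x < f \<bullet> x" using H by blast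
    then show False using E_le[OF f, of x] h by auto
  qed
  then have fx: "f \<bullet> x = N x" using h by simp
  have "A x = {f}"
  proof
    show "A x \<subseteq> {f}"
    proof
      fix g assume g: "g \<in> A x"
      show "g \<in> {f}"
      proof (rule ccontr)
        assume "g \<notin> {f}"
        then have "g \<bullet> x < f \<bullet> x" using H g A_sub by auto
        then show False using g fx unfolding A_def by auto
      qed
    qed
  qed (use f fx in \<open>auto simp: A_def\<close>)
  then show "x \<in> Smp f" unfolding Smp_def by simp
qed

lemma Smp_eq: "f \<in> E \<Longrightarrow> Smp f = (\<Inter>g\<in>E-{f}. {x. g \<bullet> x < f \<bullet> x})"
  using Smp_char by blast

lemma Smp_open: "f \<in> E \<Longrightarrow> open (Smp f)"
  unfolding Smp_eq using E_finite
  by (intro open_INT ballI open_Collect_less continuous_intros) auto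

lemma Smp_convex: "f \<in> E \<Longrightarrow> convex (Smp f)"
  unfolding Smp_eq
proof (intro convex_INT ballI)
  fix g assume "g \<in> E - {f}"
  have "{x. g \<bullet> x < f \<bullet> x} = {x. (g - f) \<bullet> x < 0}" by (auto simp: inner_diff_left)
  then show "convex {x. g \<bullet> x < f \<bullet> x}" using convex_halfspace_lt by metis
qed

lemma Smp_ne: "f \<in> E \<Longrightarrow> Smp f \<noteq> {}"
proof -
  assume f: "f \<in> E"
  then have "{f} face_of dual_ball N" unfolding E_def Ext_def using face_of_singleton by blast
  then have "{f} exposed_face_of dual_ball N" using exposed_face_of_polyhedron[OF db_polyhedron] by blast
  then obtain a b where ab: "dual_ball N \<subseteq> {u. a \<bullet> u \<le> b}" "{f} = dual_ball N \<inter> {u. a \<bullet> u = b}"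
    unfolding exposed_face_of_def by blast
  obtain u where u: "u \<in> dual_ball N" "u \<bullet> a = N a" using HB by blast
  have fb: "f \<bullet> a = b" using ab(2) by (auto simp: inner_commute)
  have Na: "N a = b"
  proof -
    have "N a \<le> b" using u ab(1) by (auto simp: inner_commute)
    moreover have "f \<bullet> a \<le> N a" using E_le f by blast
    ultimately show ?thesis using fb by simp
  qed
  have "A a = {f}"
  proof
    show "A a \<subseteq> {f}"
    proof
      fix g assume "g \<in> A a"
      then have "g \<in> dual_ball N" "a \<bullet> g = b" using E_db Na unfolding A_def by (auto simp: inner_commute)
      then show "g \<in> {f}" using ab(2) by blast
    qed
  qed (use f fb Na in \<open>auto simp: A_def\<close>)
  then show ?thesis unfolding Smp_def by blast
qed

lemma Smp_0: "f \<in> E \<Longrightarrow> 0 \<notin> Smp f"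
proof
  assume f: "f \<in> E" and "0 \<in> Smp f"
  then have "E = {f}" unfolding Smp_def using A_0 by simp
  moreover have "- f \<in> E" using E_neg f by blast
  moreover have "f \<noteq> 0" using E_nz f by blast
  ultimately show False using neg_ne by blast
qed

lemma Smp_disj: "f \<noteq> g \<Longrightarrow> Smp f \<inter> Smp g = {}"
  unfolding Smp_def by auto

lemma Smp_closure: "f \<in> A z \<Longrightarrow> z \<in> closure (Smp f)"
proof -
  assume fz: "f \<in> A z"
  then have f: "f \<in> E" and fzv: "f \<bullet> z = N z" unfolding A_def by auto
  obtain w where w: "w \<in> Smp f" using Smp_ne[OF f] by blast
  have inS: "z + t *\<^sub>R w \<in> Smp f" if t: "t > 0" for t
    unfolding Smp_char[OF f]
  proof
    fix g assume g: "g \<in> E - {f}"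
    have "g \<bullet> z \<le> f \<bullet> z" using E_le[of g z] g fzv by auto
    moreover have "g \<bullet> w < f \<bullet> w" using w g Smp_char[OF f] by blast
    ultimately show "g \<bullet> (z + t *\<^sub>R w) < f \<bullet> (z + t *\<^sub>R w)" using t
      by (simp add: inner_add_right) (smt (verit) mult_strict_left_mono)
  qed
  show ?thesis unfolding closure_approachable
  proof (intro allI impI)
    fix e :: real assume e: "e > 0"
    define t where "t = e / (norm w + 1)"
    have np: "norm w + 1 > 0" by (smt (verit) norm_ge_zero)
    have t: "t > 0" unfolding t_def using e np by simp
    have "dist (z + t *\<^sub>R w) z = t * norm w" using t by (simp add: dist_norm)
    also have "\<dots> < e" unfolding t_def using e np
      by (simp add: field_simps)
    finally show "\<exists>y\<in>Smp f. dist y z < e" using inS[OF t] by blast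
  qed
qed

lemma Smp_dense: "open U \<Longrightarrow> U \<noteq> {} \<Longrightarrow> \<exists>f\<in>E. U \<inter> Smp f \<noteq> {}"
proof (rule ccontr)
  assume U: "open U" "U \<noteq> {}" and H: "\<not> (\<exists>f\<in>E. U \<inter> Smp f \<noteq> {})"
  define H where "H = (\<lambda>(f,g). {x::'a. (f - g) \<bullet> x = 0}) ` {(f,g). f \<in> E \<and> g \<in> E \<and> f \<noteq> g}"
  have fin: "finite H" unfolding H_def
    by (rule finite_imageI, rule finite_subset[of _ "E \<times> E"]) (use E_finite in auto)
  have neg: "negligible S" if "S \<in> H" for S
    using that unfolding H_def by (auto intro!: negligible_hyperplane)
  have "U \<subseteq> \<Union>H"
  proof
    fix x assume x: "x \<in> U"
    obtain f where f: "f \<in> A x" using A_ne by blast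
    have "x \<notin> Smp f" using H x f A_sub by blast
    then have "A x \<noteq> {f}" unfolding Smp_def by simp
    then obtain g where g: "g \<in> A x" "g \<noteq> f" using f by blast
    then have "(f - g) \<bullet> x = 0" using f unfolding A_def by (simp add: inner_diff_left)
    moreover have "f \<in> E" "g \<in> E" using f g A_sub by auto
    ultimately have "x \<in> {x::'a. (f - g) \<bullet> x = 0}" "{x::'a. (f - g) \<bullet> x = 0} \<in> H"
      unfolding H_def using g(2) by (auto intro!: image_eqI[of _ _ "(f,g)"])
    then show "x \<in> \<Union>H" by blast
  qed
  then have "negligible U" using negligible_subset negligible_Union[OF fin neg] by blast
  then show False using open_not_negligible U by blast
qed

lemma par1: "f \<in> A x \<Longrightarrow> f \<in> A y \<Longrightarrow> parallel_pair N x y"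
  unfolding parallel_pair_def
proof (intro exI[of _ 1] conjI)
  assume "f \<in> A x" "f \<in> A y"
  then have "f \<in> E" "f \<bullet> x = N x" "f \<bullet> y = N y" unfolding A_def by auto
  then have "N x + N y \<le> N (x + y)" using E_le[of f "x + y"] by (simp add: inner_add_right)
  then show "N (x + 1 *\<^sub>R y) = N x + N y" using Ntri[of x y] by simp
qed simp

lemma par2: "parallel_pair N x y \<Longrightarrow> \<exists>f\<in>A x. f \<in> A y \<or> - f \<in> A y"
proof -
  assume "parallel_pair N x y"
  then obtain l :: real where l: "\<bar>l\<bar> = 1" "N (x + l *\<^sub>R y) = N x + N y"
    unfolding parallel_pair_def by blast
  obtain f where f: "f \<in> E" "f \<bullet> (x + l *\<^sub>R y) = N (x + l *\<^sub>R y)" using E_attain by blast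
  have fx: "f \<bullet> x \<le> N x" using E_le f by blast
  have l1: "l = 1 \<or> l = -1" using l(1) by auto
  have fy: "l * (f \<bullet> y) \<le> N y"
    using l1 E_le[OF f(1), of y] E_le[OF E_neg[OF f(1)], of y] by auto
  have eq: "f \<bullet> x + l * (f \<bullet> y) = N x + N y" using f(2) l(2) by (simp add: inner_add_right)
  then have "f \<bullet> x = N x" "l * (f \<bullet> y) = N y" using fx fy by linarith+
  then show ?thesis using l1 f(1) E_neg[OF f(1)] unfolding A_def by auto
qed

lemma J_eq: "x \<noteq> 0 \<Longrightarrow> J N x = dual_ball N \<inter> {u. x \<bullet> u = N x}"
proof -
  assume x: "x \<noteq> 0"
  have Nx: "N x > 0" using Npos[OF x] .
  show ?thesis
  proof
    show "J N x \<subseteq> dual_ball N \<inter> {u. x \<bullet> u = N x}"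
      unfolding J_def dual_sphere_def dual_ball_def by (auto simp: inner_commute)
  next
    show "dual_ball N \<inter> {u. x \<bullet> u = N x} \<subseteq> J N x"
    proof
      fix u assume u: "u \<in> dual_ball N \<inter> {u. x \<bullet> u = N x}"
      then have "dual_norm N u \<le> 1" unfolding dual_ball_def by simp
      moreover have "N x \<le> dual_norm N u * N x" using dn_ineq[of u x] u by (auto simp: inner_commute)
      then have "1 \<le> dual_norm N u" using Nx by simp
      ultimately show "u \<in> J N x" using u unfolding J_def dual_sphere_def by (auto simp: inner_commute)
    qed
  qed
qed

lemma Ext_J: "x \<noteq> 0 \<Longrightarrow> Ext (J N x) = A x"
proof -
  assume x: "x \<noteq> 0"
  have "Ext (J N x) = {v. v extreme_point_of dual_ball N \<and> v \<in> dual_ball N \<inter> {u. x \<bullet> u = N x}}"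
    unfolding J_eq[OF x] Ext_def using extreme_point_of_face[OF face_x] by blast
  then show ?thesis unfolding A_def E_def Ext_def by (auto simp: inner_commute extreme_point_of_def)
qed

lemma Ext_single: "Ext {f} = {f}"
  unfolding Ext_def extreme_point_of_def by auto

lemma dn_neg: "dual_norm N (- u) = dual_norm N u"
  unfolding dual_norm_def by simp

lemma dn_0: "dual_norm N 0 = 0"
proof -
  have "(\<lambda>x. \<bar>(0::'a) \<bullet> x\<bar>) ` unit_ball N = {0}" using ub_0 by auto
  then show ?thesis unfolding dual_norm_def by simp
qed

lemma Sm_eq: "f \<in> E \<Longrightarrow> Sm N f = Smp f"
proof -
  assume f: "f \<in> E"
  have "J N x = {f} \<longleftrightarrow> A x = {f}" for x
  proof (cases "x = 0")
    case True
    have "J N 0 \<noteq> {f}"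
    proof
      assume J0: "J N 0 = {f}"
      then have "f \<in> dual_sphere N" unfolding J_def by auto
      then have "- f \<in> dual_sphere N" unfolding dual_sphere_def using dn_neg by simp
      then have "- f \<in> J N 0" unfolding J_def by simp
      then have "- f = f" using J0 by simp
      moreover have "f \<noteq> 0" using \<open>f \<in> dual_sphere N\<close> dn_0 unfolding dual_sphere_def by auto
      ultimately show False using neg_ne by blast
    qed
    moreover have "A 0 \<noteq> {f}" using Smp_0[OF f] unfolding Smp_def by simp
    ultimately show ?thesis using True by simp
  next
    case False
    let ?F = "J N x"
    have cF: "compact ?F" unfolding J_eq[OF False] using db_compact closed_hyperplane by blast
    have vF: "convex ?F" unfolding J_eq[OF False] using db_convex convex_hyperplane convex_Int by blast
    have KM: "?F = convex hull (Ext ?F)" unfolding Ext_def using Krein_Milman_Minkowski[OF cF vF] .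
    show ?thesis
    proof
      assume "?F = {f}" then show "A x = {f}" using Ext_J[OF False] Ext_single by metis
    next
      assume "A x = {f}" then show "?F = {f}" using KM Ext_J[OF False] by simp
    qed
  qed
  then show ?thesis unfolding Sm_def Smp_def by simp
qed


lemma Smp_closure_sub: "closure (Smp g) \<subseteq> {z. g \<bullet> z = N z}"
proof (rule closure_minimal)
  show "Smp g \<subseteq> {z. g \<bullet> z = N z}" unfolding Smp_def A_def by auto
  show "closed {z. g \<bullet> z = N z}"
    by (rule closed_Collect_eq[OF _ N_cont]) (intro continuous_intros)
qed

end

theorem main_aux:
  fixes NX :: "'a::euclidean_space \<Rightarrow> real"
    and NY :: "'b::euclidean_space \<Rightarrow> real"
    and T :: "'a \<Rightarrow> 'b"
  assumes "is_norm NX" and "is_norm NY"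
    and "DIM('a) = DIM('b)"
    and "polyhedral NX" and "polyhedral NY"
    and card: "card (Ext (dual_ball NX)) = card (Ext (dual_ball NY))"
    and lin: "linear T" and bij: "bij T"
    and pres: "preserves_parallel NX NY T"
  shows "(\<forall>f \<in> Ext (dual_ball NX). \<exists>!g. g \<in> Ext (dual_ball NY) \<and> T ` Sm NX f = Sm NY g)
       \<and> (\<forall>x. x \<noteq> 0 \<longrightarrow> card (Ext (J NX x)) = card (Ext (J NY (T x))))"
proof -
  interpret X: pnorm NX using assms unfolding pnorm_def by blast
  interpret Y: pnorm NY using assms unfolding pnorm_def by blast
  have inj: "inj T" using bij bij_is_inj by blast
  have surj: "surj T" using bij bij_is_surj by blast
  have blin: "bounded_linear T" using lin linear_conv_bounded_linear by blast
  have contat: "\<And>x. continuous (at x) T" using linear_continuous_at[OF blin] by blast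
  have cont: "continuous_on UNIV T" using linear_continuous_on[OF blin] .
  have openT: "\<And>U. open U \<Longrightarrow> open (T ` U)" using open_bijective_linear_image_eq[OF lin bij] by blast
  have T0: "\<And>x. T x = 0 \<Longrightarrow> x = 0"
    using inj linear_0[OF lin] by (metis injD)
  have clT: "\<And>S. T ` closure S \<subseteq> closure (T ` S)" using closure_linear_image_subset[OF lin] by blast

  have step: "\<exists>g\<in>Y.E. T ` X.Smp f \<subseteq> Y.Smp g" if f: "f \<in> X.E" for f
  proof -
    let ?S = "X.Smp f"
    have oTS: "open (T ` ?S)" using openT X.Smp_open[OF f] by blast
    have c1: "\<exists>x'\<in>?S. T x' \<in> Y.Smp h" if x: "x \<in> ?S" and h: "h \<in> Y.A (T x)" for x h
    proof -
      have "T x \<in> closure (Y.Smp h)" using Y.Smp_closure[OF h] .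
      then have "T ` ?S \<inter> closure (Y.Smp h) \<noteq> {}" using x by blast
      then have "T ` ?S \<inter> Y.Smp h \<noteq> {}" using open_Int_closure_eq_empty[OF oTS] by blast
      then show ?thesis by blast
    qed
    have c2: "\<exists>g\<in>Y.E. T x \<in> Y.Smp g" if x: "x \<in> ?S" for x
    proof -
      have xnz: "x \<noteq> 0" using x X.Smp_0[OF f] by blast
      then have Txnz: "T x \<noteq> 0" using T0 by blast
      obtain h1 where h1: "h1 \<in> Y.A (T x)" using Y.A_ne by blast
      have "Y.A (T x) = {h1}"
      proof
        show "Y.A (T x) \<subseteq> {h1}"
        proof
          fix h2 assume h2: "h2 \<in> Y.A (T x)"
          obtain x1 where x1: "x1 \<in> ?S" "T x1 \<in> Y.Smp h1" using c1[OF x h1] by blast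
          obtain x2 where x2: "x2 \<in> ?S" "T x2 \<in> Y.Smp h2" using c1[OF x h2] by blast
          have "X.A x1 = {f}" "X.A x2 = {f}" using x1 x2 unfolding X.Smp_def by auto
          then have "parallel_pair NX x1 x2" using X.par1[of f x1 x2] by simp
          then have "parallel_pair NY (T x1) (T x2)" using pres unfolding preserves_parallel_def by blast
          then obtain k where k: "k \<in> Y.A (T x1)" "k \<in> Y.A (T x2) \<or> - k \<in> Y.A (T x2)"
            using Y.par2 by blast
          have A1: "Y.A (T x1) = {h1}" "Y.A (T x2) = {h2}" using x1 x2 unfolding Y.Smp_def by auto
          then have "h2 = h1 \<or> h2 = - h1" using k by auto
          then show "h2 \<in> {h1}" using Y.A_opp[OF Txnz h1] h2 by auto
        qed
      qed (use h1 in blast)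
      then show ?thesis using h1 Y.A_sub unfolding Y.Smp_def by blast
    qed
    obtain x0 where x0: "x0 \<in> ?S" using X.Smp_ne[OF f] by blast
    obtain g0 where g0: "g0 \<in> Y.E" "T x0 \<in> Y.Smp g0" using c2[OF x0] by blast
    let ?U = "Y.Smp g0" and ?V = "\<Union>g\<in>Y.E - {g0}. Y.Smp g"
    have conn: "connected (T ` ?S)"
      using connected_linear_image[OF lin convex_connected[OF X.Smp_convex[OF f]]] .
    have oU: "open ?U" using Y.Smp_open[OF g0(1)] .
    have oV: "open ?V" using Y.Smp_open by blast
    have disj: "?U \<inter> ?V \<inter> T ` ?S = {}" using Y.Smp_disj by blast
    have cov: "T ` ?S \<subseteq> ?U \<union> ?V" using c2 by blast
    have "?U \<inter> T ` ?S = {} \<or> ?V \<inter> T ` ?S = {}" using connectedD[OF conn oU oV disj cov] .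
    moreover have "?U \<inter> T ` ?S \<noteq> {}" using x0 g0 by blast
    ultimately have "?V \<inter> T ` ?S = {}" by blast
    then have "T ` ?S \<subseteq> ?U" using cov by blast
    then show ?thesis using g0 by blast
  qed

  define \<sigma> where "\<sigma> f = (SOME g. g \<in> Y.E \<and> T ` X.Smp f \<subseteq> Y.Smp g)" for f
  have sig: "\<sigma> f \<in> Y.E" "T ` X.Smp f \<subseteq> Y.Smp (\<sigma> f)" if f: "f \<in> X.E" for f
    using someI_ex[OF step[OF f, unfolded Bex_def]] unfolding \<sigma>_def by blast+
  have sig_uniq: "g = \<sigma> f" if f: "f \<in> X.E" and "x \<in> X.Smp f" "T x \<in> Y.Smp g" for f g x
  proof -
    have "T x \<in> Y.Smp (\<sigma> f)" using sig(2)[OF f] that by blast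
    then show ?thesis using Y.Smp_disj that by blast
  qed
  have sig_surj: "\<sigma> ` X.E = Y.E"
  proof
    show "\<sigma> ` X.E \<subseteq> Y.E" using sig by blast
  next
    show "Y.E \<subseteq> \<sigma> ` X.E"
    proof
      fix g assume g: "g \<in> Y.E"
      have oW: "open (T -` Y.Smp g)" using continuous_open_vimage[OF Y.Smp_open[OF g] contat] .
      obtain y where "y \<in> Y.Smp g" using Y.Smp_ne[OF g] by blast
      then have "T (inv T y) \<in> Y.Smp g" using surj by (simp add: surj_f_inv_f)
      then have "T -` Y.Smp g \<noteq> {}" by blast
      then obtain f where f: "f \<in> X.E" "(T -` Y.Smp g) \<inter> X.Smp f \<noteq> {}" using X.Smp_dense oW by blast
      then obtain x where "x \<in> X.Smp f" "T x \<in> Y.Smp g" by blast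
      then have "g = \<sigma> f" using sig_uniq f(1) by blast
      then show "g \<in> \<sigma> ` X.E" using f(1) by blast
    qed
  qed
  have sig_inj: "inj_on \<sigma> X.E"
    by (rule eq_card_imp_inj_on[OF X.E_finite]) (use sig_surj card in \<open>simp add: X.E_def Y.E_def\<close>)

  have clos_sig: "T x \<in> closure (Y.Smp (\<sigma> f))" if "f \<in> X.A x" for f x
  proof -
    have f: "f \<in> X.E" using that X.A_sub by blast
    have "T x \<in> T ` closure (X.Smp f)" using X.Smp_closure[OF that] by blast
    also have "\<dots> \<subseteq> closure (T ` X.Smp f)" using clT .
    also have "\<dots> \<subseteq> closure (Y.Smp (\<sigma> f))" using closure_mono[OF sig(2)[OF f]] .
    finally show ?thesis .
  qed

  have sig_eq: "T ` X.Smp f = Y.Smp (\<sigma> f)" if f: "f \<in> X.E" for f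
  proof
    show "T ` X.Smp f \<subseteq> Y.Smp (\<sigma> f)" using sig(2)[OF f] .
  next
    show "Y.Smp (\<sigma> f) \<subseteq> T ` X.Smp f"
    proof
      fix y assume y: "y \<in> Y.Smp (\<sigma> f)"
      define x where "x = inv T y"
      have Tx: "T x = y" unfolding x_def using surj by (simp add: surj_f_inv_f)
      have key: "\<sigma> f' = \<sigma> f" if f': "f' \<in> X.A x" for f'
      proof -
        have "T x \<in> closure (Y.Smp (\<sigma> f'))" using clos_sig[OF f'] .
        then have "Y.Smp (\<sigma> f) \<inter> closure (Y.Smp (\<sigma> f')) \<noteq> {}" using y Tx by blast
        then have "Y.Smp (\<sigma> f) \<inter> Y.Smp (\<sigma> f') \<noteq> {}"
          using open_Int_closure_eq_empty[OF Y.Smp_open[OF sig(1)[OF f]]] by blast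
        then show ?thesis using Y.Smp_disj by blast
      qed
      obtain f1 where f1: "f1 \<in> X.A x" using X.A_ne by blast
      have "X.A x = {f1}"
      proof
        show "X.A x \<subseteq> {f1}"
        proof
          fix f2 assume f2: "f2 \<in> X.A x"
          have "\<sigma> f2 = \<sigma> f1" using key[OF f1] key[OF f2] by simp
          then show "f2 \<in> {f1}" using sig_inj f1 f2 X.A_sub inj_onD by fastforce
        qed
      qed (use f1 in blast)
      then have "x \<in> X.Smp f1" unfolding X.Smp_def by simp
      moreover have "f1 = f" using key[OF f1] sig_inj f X.A_sub f1 inj_onD by fastforce
      ultimately show "y \<in> T ` X.Smp f" using Tx by blast
    qed
  qed

  have partI: "\<forall>f \<in> Ext (dual_ball NX). \<exists>!g. g \<in> Ext (dual_ball NY) \<and> T ` Sm NX f = Sm NY g"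
  proof
    fix f assume "f \<in> Ext (dual_ball NX)"
    then have f: "f \<in> X.E" unfolding X.E_def .
    show "\<exists>!g. g \<in> Ext (dual_ball NY) \<and> T ` Sm NX f = Sm NY g"
    proof (rule ex1I[of _ "\<sigma> f"])
      show "\<sigma> f \<in> Ext (dual_ball NY) \<and> T ` Sm NX f = Sm NY (\<sigma> f)"
        using sig(1)[OF f] sig_eq[OF f] X.Sm_eq[OF f] Y.Sm_eq[OF sig(1)[OF f]]
        unfolding Y.E_def by simp
    next
      fix g assume g: "g \<in> Ext (dual_ball NY) \<and> T ` Sm NX f = Sm NY g"
      then have gE: "g \<in> Y.E" unfolding Y.E_def by simp
      then have "Y.Smp g = Y.Smp (\<sigma> f)" using g sig_eq[OF f] X.Sm_eq[OF f] Y.Sm_eq by simp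
      moreover have "Y.Smp g \<noteq> {}" using Y.Smp_ne[OF gE] .
      ultimately show "g = \<sigma> f" using Y.Smp_disj by blast
    qed
  qed

  have A_T: "Y.A (T x) = \<sigma> ` X.A x" for x
  proof
    show "\<sigma> ` X.A x \<subseteq> Y.A (T x)"
    proof
      fix h assume "h \<in> \<sigma> ` X.A x"
      then obtain f where f: "f \<in> X.A x" "h = \<sigma> f" by blast
      have fE: "f \<in> X.E" using f X.A_sub by blast
      have "T x \<in> {z. \<sigma> f \<bullet> z = NY z}" using clos_sig[OF f(1)] Y.Smp_closure_sub by blast
      then show "h \<in> Y.A (T x)" using f sig(1)[OF fE] unfolding Y.A_def by simp
    qed
  next
    show "Y.A (T x) \<subseteq> \<sigma> ` X.A x"
    proof
      fix h assume h: "h \<in> Y.A (T x)"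
      then have "h \<in> Y.E" using Y.A_sub by blast
      then obtain f where f: "f \<in> X.E" "h = \<sigma> f" using sig_surj by blast
      have Tcl: "T x \<in> closure (T ` X.Smp f)" using Y.Smp_closure[OF h] sig_eq[OF f(1)] f(2) by simp
      have "x \<in> closure (X.Smp f)"
      proof (rule ccontr)
        assume nx: "x \<notin> closure (X.Smp f)"
        let ?U = "- closure (X.Smp f)"
        have "open ?U" by blast
        then have oTU: "open (T ` ?U)" using openT by blast
        have "?U \<inter> X.Smp f = {}" using closure_subset by blast
        then have "T ` ?U \<inter> T ` X.Smp f = {}" using inj by (auto dest: injD)
        then have "T ` ?U \<inter> closure (T ` X.Smp f) = {}" using open_Int_closure_eq_empty[OF oTU] by blast
        moreover have "T x \<in> T ` ?U" using nx by blast
        ultimately show False using Tcl by blast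
      qed
      then have "x \<in> {z. f \<bullet> z = NX z}" using X.Smp_closure_sub by blast
      then have "f \<in> X.A x" using f(1) unfolding X.A_def by simp
      then show "h \<in> \<sigma> ` X.A x" using f(2) by blast
    qed
  qed

  have partII: "\<forall>x. x \<noteq> 0 \<longrightarrow> card (Ext (J NX x)) = card (Ext (J NY (T x)))"
  proof (intro allI impI)
    fix x :: 'a assume x: "x \<noteq> 0"
    then have Tx: "T x \<noteq> 0" using T0 by blast
    have "inj_on \<sigma> (X.A x)" using sig_inj X.A_sub inj_on_subset by blast
    then have "card (\<sigma> ` X.A x) = card (X.A x)" by (rule card_image)
    then show "card (Ext (J NX x)) = card (Ext (J NY (T x)))"
      using X.Ext_J[OF x] Y.Ext_J[OF Tx] A_T[of x] by simp
  qed
  show ?thesis using partI partII by blast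
qed


theorem mainTheorem17:
  fixes NX :: "'a::euclidean_space \<Rightarrow> real"
    and NY :: "'b::euclidean_space \<Rightarrow> real"
    and T :: "'a \<Rightarrow> 'b"
  assumes "is_norm NX" and "is_norm NY"
    and "DIM('a) = DIM('b)"
    and "polyhedral NX" and "polyhedral NY"
    and "card (Ext (dual_ball NX)) = card (Ext (dual_ball NY))"
    and "linear T" and "bij T"
    and "preserves_parallel NX NY T"
  shows "(\<forall>f \<in> Ext (dual_ball NX). \<exists>!g. g \<in> Ext (dual_ball NY) \<and> T ` Sm NX f = Sm NY g)
       \<and> (\<forall>x. x \<noteq> 0 \<longrightarrow> card (Ext (J NX x)) = card (Ext (J NY (T x))))"
  using main_aux[OF assms] .

end
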